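(* Let $H$ be a real Hilbert space, $A$ a strictly positive selfadjoint operator on $H$ with $\lambda_1>0$ the minimum of its spectrum, $\alpha,\beta,\gamma>0$ with $\mu=\gamma-\alpha\beta\ge0$, $\eta\in\mathbb R$, $\rho>0$, and assume $$\eta^2>\frac{\mu}{\alpha\lambda_1}\qquad\text{and}\qquad\rho>\frac{2\mu\lambda_1}{\alpha\eta^2\lambda_1-\mu}.$$ For $(u,v,w,\theta)\in\mathcal H=H^1\times H^1\times H\times H$ and $\varepsilon>0$ define $$\mathsf L=\frac{\gamma}{\alpha}\|v+\alpha u\|_1^2+\|w+\alpha v\|^2-\frac{\mu}{\alpha}\|v\|_1^2+\|\theta\|^2+\rho\Big(\eta\langle\theta,v\rangle+\frac{\eta^2}{2}\|v\|_1^2+\frac12\|\theta\|_{-1}^2\Big)-\varepsilon^2\langle v-\alpha u,w+\alpha v\rangle,$$ $$\mathcal E=\frac12\big[\|v+\alpha u\|_1^2+\|w+\alpha v\|^2+\|v\|_1^2+\|\theta\|^2\big].$$ Then there exists $c>1$ such that $\frac1c\mathcal E\le\mathsf L\le c\,\mathcal E$ on $\mathcal H$ for every $\varepsilon>0$ small enough.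
   Context: $H^\sigma=\mathcal D(A^{\sigma/2})$ with $\|u\|_\sigma=\|A^{\sigma/2}u\|$ (for $\sigma<0$, the completion); $\langle\cdot,\cdot\rangle,\|\cdot\|$ are the inner product and norm of $H$. *)

theory Defs
  imports "HOL-Analysis.Analysis"
begin

definition linear_op_on :: "('a::real_vector \<Rightarrow> 'a) \<Rightarrow> 'a set \<Rightarrow> bool" where
  "linear_op_on A D \<longleftrightarrow> subspace D \<and>
     (\<forall>u\<in>D. \<forall>v\<in>D. A (u + v) = A u + A v) \<and> (\<forall>c. \<forall>u\<in>D. A (c *\<^sub>R u) = c *\<^sub>R A u)"

definition selfadjoint_op :: "('a::real_inner \<Rightarrow> 'a) \<Rightarrow> 'a set \<Rightarrow> bool" where
  "selfadjoint_op A D \<longleftrightarrow> linear_op_on A D \<and> closure D = UNIV \<and>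
     (\<forall>u\<in>D. \<forall>y\<in>D. inner (A u) y = inner u (A y)) \<and>
     (\<forall>y z. (\<forall>u\<in>D. inner (A u) y = inner u z) \<longrightarrow> y \<in> D \<and> z = A y)"

definition strictly_positive_op :: "('a::real_inner \<Rightarrow> 'a) \<Rightarrow> 'a set \<Rightarrow> bool" where
  "strictly_positive_op A D \<longleftrightarrow> (\<forall>u\<in>D. u \<noteq> 0 \<longrightarrow> inner (A u) u > 0)"

definition spectrum_op :: "('a::real_normed_vector \<Rightarrow> 'a) \<Rightarrow> 'a set \<Rightarrow> real set" where
  "spectrum_op A D = {l. \<not> (\<exists>R. bounded_linear R \<and>
       (\<forall>x. R x \<in> D \<and> A (R x) - l *\<^sub>R R x = x) \<and>
       (\<forall>u\<in>D. R (A u - l *\<^sub>R u) = u))}"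

text \<open>B is A^(-1/2): the bounded, selfadjoint, nonnegative square root of A^(-1).
  (The positive square root is unique, so B is determined by A.)\<close>
definition is_inv_sqrt :: "('a::real_inner \<Rightarrow> 'a) \<Rightarrow> 'a set \<Rightarrow> ('a \<Rightarrow> 'a) \<Rightarrow> bool" where
  "is_inv_sqrt A D B \<longleftrightarrow> bounded_linear B \<and>
     (\<forall>x y. inner (B x) y = inner x (B y)) \<and> (\<forall>x. inner (B x) x \<ge> 0) \<and>
     (\<forall>x. B (B x) \<in> D \<and> A (B (B x)) = x) \<and> (\<forall>u\<in>D. B (B (A u)) = u)"

text \<open>H^1 = D(A^(1/2)) = range of A^(-1/2); norm_1 u = |A^(1/2) u|; norm_(-1) t = |A^(-1/2) t|.\<close>
definition H1 :: "('a \<Rightarrow> 'a) \<Rightarrow> 'a set" where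
  "H1 B = range B"

definition norm1 :: "('a::real_normed_vector \<Rightarrow> 'a) \<Rightarrow> 'a \<Rightarrow> real" where
  "norm1 B u = norm (inv B u)"

definition normm1 :: "('a::real_normed_vector \<Rightarrow> 'a) \<Rightarrow> 'a \<Rightarrow> real" where
  "normm1 B t = norm (B t)"

end

theory Submission
  imports Defs
begin


lemma S_coercive:
  fixes T :: "'a::real_inner \<Rightarrow> 'a"
  assumes lin: "bounded_linear T" and sym: "\<And>x y. inner (T x) y = inner x (T y)"
    and pos: "\<And>x. inner (M *\<^sub>R x - T x) x \<ge> 0"
    and KS: "\<And>x. norm (M *\<^sub>R x - T x) \<le> KS * norm x" and KSp: "KS > 0"
  shows "(norm (M *\<^sub>R x - T x))\<^sup>2 \<le> KS * inner (M *\<^sub>R x - T x) x"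
proof -
  define S where "S = (\<lambda>x. M *\<^sub>R x - T x)"
  have Sl: "S (x + t *\<^sub>R z) = S x + t *\<^sub>R S z" for x z t
    unfolding S_def using lin by (simp add: linear_simps algebra_simps)
  have Ssym: "inner (S x) y = inner x (S y)" for x y
    unfolding S_def by (simp add: inner_diff_left inner_diff_right sym)
  have Spos: "inner (S x) x \<ge> 0" for x using pos unfolding S_def by simp
  define z where "z = S x"
  define t where "t = - 1 / KS"
  have "0 \<le> inner (S (x + t *\<^sub>R z)) (x + t *\<^sub>R z)" by (rule Spos)
  also have "\<dots> = inner (S x) x + 2 * t * (inner z z) + t\<^sup>2 * inner (S z) z"
    unfolding Sl using Ssym[of z x] 
    by (simp add: inner_add_left inner_add_right z_def inner_commute power2_eq_square algebra_simps)
  also have "inner (S z) z \<le> KS * (norm z)\<^sup>2"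
  proof -
    have "inner (S z) z \<le> norm (S z) * norm z" by (rule norm_cauchy_schwarz)
    also have "\<dots> \<le> KS * norm z * norm z" using KS[of z] unfolding S_def
      by (simp add: mult_right_mono)
    finally show ?thesis by (simp add: power2_eq_square)
  qed
  hence "inner (S x) x + 2 * t * (inner z z) + t\<^sup>2 * inner (S z) z \<le>
     inner (S x) x + 2 * t * (inner z z) + t\<^sup>2 * (KS * (norm z)\<^sup>2)"
    by (simp add: mult_left_mono)
  finally have "0 \<le> inner (S x) x + 2 * t * (norm z)\<^sup>2 + t\<^sup>2 * (KS * (norm z)\<^sup>2)"
    by (simp add: power2_norm_eq_inner)
  also have "\<dots> = inner (S x) x - (norm z)\<^sup>2 / KS"
    unfolding t_def using KSp by (simp add: field_simps power2_eq_square)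
  finally show ?thesis using KSp unfolding z_def S_def by (simp add: field_simps)
qed

lemma T_bound:
  fixes T :: "'a::real_inner \<Rightarrow> 'a"
  assumes lin: "bounded_linear T" and sym: "\<And>x y. inner (T x) y = inner x (T y)"
    and pos: "\<And>x. inner (T x) x \<ge> 0" and s0: "s0 \<ge> 0"
    and inv: "\<And>M. M > s0 \<Longrightarrow> \<exists>K. \<forall>x. norm x \<le> K * norm (M *\<^sub>R x - T x)"
  shows "inner (T x) x \<le> s0 * (norm x)\<^sup>2"
proof -
  obtain KT where KT: "\<And>x. norm (T x) \<le> norm x * KT" "KT > 0"
    using bounded_linear.pos_bounded[OF lin] by blast
  define Q where "Q = {inner (T x) x | x. norm x \<le> 1}"
  have Qne: "Q \<noteq> {}" unfolding Q_def by (auto intro: exI[of _ 0])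
  have Qbdd: "q \<le> KT" if qQ: "q \<in> Q" for q
  proof -
    obtain x where x: "q = inner (T x) x" "norm x \<le> 1" using qQ unfolding Q_def by blast
    have "q \<le> norm (T x) * norm x" using x norm_cauchy_schwarz by simp
    also have "\<dots> \<le> (norm x * KT) * norm x" using KT x(2) by (simp add: mult_right_mono)
    also have "\<dots> = KT * (norm x)\<^sup>2" by (simp add: power2_eq_square)
    also have "\<dots> \<le> KT" using x(2) KT(2)
      by (simp add: mult_left_le power_le_one)
    finally show ?thesis .
  qed
  define Ms where "Ms = Sup Q"
  have bddQ: "bdd_above Q" using Qbdd by (auto simp: bdd_above_def)
  have "(0::real) = inner (T 0) 0 \<and> norm (0::'a) \<le> 1" by simp
  hence Q0: "(0::real) \<in> Q" unfolding Q_def by blast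
  have Ms0: "Ms \<ge> 0" unfolding Ms_def
    using cSup_upper[OF Q0 bddQ] .
  have Msb: "inner (T x) x \<le> Ms * (norm x)\<^sup>2" for x
  proof (cases "x = 0")
    case True then show ?thesis using lin by (simp add: linear_simps)
  next
    case False
    define y where "y = (1 / norm x) *\<^sub>R x"
    have "norm y \<le> 1" using False unfolding y_def by simp
    hence "inner (T y) y \<le> Ms" unfolding Ms_def using bddQ
      by (intro cSup_upper) (auto simp: Q_def)
    moreover have "inner (T y) y = inner (T x) x / (norm x)\<^sup>2"
      unfolding y_def using lin by (simp add: linear_simps power2_eq_square)
    ultimately show ?thesis using False by (simp add: field_simps)
  qed
  have "Ms \<le> s0"
  proof (rule ccontr)
    assume "\<not> Ms \<le> s0"
    hence gt: "Ms > s0" by simp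
    obtain K where K: "\<And>x. norm x \<le> K * norm (Ms *\<^sub>R x - T x)" using inv[OF gt] by blast
    define KS where "KS = Ms + KT"
    have KSp: "KS > 0" using Ms0 KT unfolding KS_def by simp
    have KSb: "norm (Ms *\<^sub>R x - T x) \<le> KS * norm x" for x
    proof -
      have "norm (Ms *\<^sub>R x - T x) \<le> norm (Ms *\<^sub>R x) + norm (T x)" by (rule norm_triangle_ineq4)
      also have "\<dots> \<le> Ms * norm x + KT * norm x" using KT(1)[of x] Ms0 by (simp add: mult.commute)
      finally show ?thesis unfolding KS_def by (simp add: algebra_simps)
    qed
    have posS: "inner (Ms *\<^sub>R x - T x) x \<ge> 0" for x
      using Msb[of x] by (simp add: inner_diff_left power2_norm_eq_inner)
    define \<delta> where "\<delta> = 1 / (K\<^sup>2 * KS + 1)"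
    have dp: "\<delta> > 0" unfolding \<delta>_def using KSp by (simp add: add_nonneg_pos)
    have coer: "inner (Ms *\<^sub>R x - T x) x \<ge> \<delta> * (norm x)\<^sup>2" for x
    proof -
      have a: "(norm (Ms *\<^sub>R x - T x))\<^sup>2 \<le> KS * inner (Ms *\<^sub>R x - T x) x"
        by (rule S_coercive[OF lin sym posS KSb KSp])
      have "(norm x)\<^sup>2 \<le> (K * norm (Ms *\<^sub>R x - T x))\<^sup>2"
        using K[of x] by (simp add: power_mono)
      also have "\<dots> = K\<^sup>2 * (norm (Ms *\<^sub>R x - T x))\<^sup>2" by (simp add: power_mult_distrib)
      also have "\<dots> \<le> K\<^sup>2 * (KS * inner (Ms *\<^sub>R x - T x) x)" using a by (simp add: mult_left_mono)
      also have "\<dots> \<le> (K\<^sup>2 * KS + 1) * inner (Ms *\<^sub>R x - T x) x" using posS[of x] by (simp add: algebra_simps)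
      finally have fin: "(norm x)\<^sup>2 \<le> (K\<^sup>2 * KS + 1) * inner (Ms *\<^sub>R x - T x) x" .
      have pd: "K\<^sup>2 * KS + 1 > 0" using KSp by (simp add: add_nonneg_pos)
      have "\<delta> * (norm x)\<^sup>2 = (norm x)\<^sup>2 / (K\<^sup>2 * KS + 1)" by (simp add: \<delta>_def)
      also have "\<dots> \<le> inner (Ms *\<^sub>R x - T x) x" using fin pd
        by (simp add: pos_divide_le_eq mult.commute)
      finally show ?thesis .
    qed
    have "Sup Q \<le> max 0 (Ms - \<delta>)"
    proof (rule cSup_least[OF Qne])
      fix q assume "q \<in> Q"
      then obtain x where x: "q = inner (T x) x" "norm x \<le> 1" unfolding Q_def by blast
      have "q \<le> (Ms - \<delta>) * (norm x)\<^sup>2" using coer[of x] x(1)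
        by (simp add: inner_diff_left power2_norm_eq_inner algebra_simps)
      also have "\<dots> \<le> max 0 (Ms - \<delta>)"
      proof (cases "Ms - \<delta> \<ge> 0")
        case True
        have "(norm x)\<^sup>2 \<le> 1" using x(2) by (simp add: power_le_one)
        then show ?thesis using True by (simp add: mult_left_le)
      next
        case False then show ?thesis by (simp add: mult_nonpos_nonneg)
      qed
      finally show "q \<le> max 0 (Ms - \<delta>)" .
    qed
    hence "Ms \<le> max 0 (Ms - \<delta>)" unfolding Ms_def .
    then show False using dp gt s0 by (simp add: max_def split: if_splits)
  qed
  then show ?thesis using Msb[of x] by (meson mult_right_mono order_trans zero_le_power2)
qed

lemma poinc:
  fixes A B :: "'a::real_inner \<Rightarrow> 'a"
  assumes lam: "\<forall>l\<in>spectrum_op A D. lam1 \<le> l" "lam1 > 0" and B: "is_inv_sqrt A D B"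
  shows "lam1 * (norm (B x))\<^sup>2 \<le> (norm x)\<^sup>2"
proof -
  have Bbl: "bounded_linear B" and Bsym: "\<And>x y. inner (B x) y = inner x (B y)"
    and BD: "\<And>x. B (B x) \<in> D" and AB: "\<And>x. A (B (B x)) = x"
    using B unfolding is_inv_sqrt_def by auto
  define T where "T = (\<lambda>x. B (B x))"
  have Tbl: "bounded_linear T" unfolding T_def
    using bounded_linear_compose[OF Bbl Bbl] by (simp add: o_def)
  have Tsym: "inner (T x) y = inner x (T y)" for x y unfolding T_def using Bsym by metis
  have Tpos: "inner (T x) x = (norm (B x))\<^sup>2" for x unfolding T_def
    using Bsym by (metis power2_norm_eq_inner)
  have inv: "\<exists>K. \<forall>x. norm x \<le> K * norm (M *\<^sub>R x - T x)" if M: "M > 1 / lam1" for M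
  proof -
    define l where "l = 1 / M"
    have Mp: "M > 0" using M lam(2) by (smt (verit) divide_pos_pos)
    have l: "0 < l" "l < lam1" unfolding l_def using M Mp lam(2)
      by (auto simp: field_simps)
    have "l \<notin> spectrum_op A D" using lam(1) l by force
    then obtain R where R: "bounded_linear R" "\<forall>u\<in>D. R (A u - l *\<^sub>R u) = u"
      unfolding spectrum_op_def by blast
    obtain KR where KR: "\<And>y. norm (R y) \<le> norm y * KR" "KR > 0"
      using bounded_linear.pos_bounded[OF R(1)] by blast
    show ?thesis
    proof (intro exI allI)
      fix x
      define u where "u = T x"
      define y where "y = M *\<^sub>R x - T x"
      have uD: "u \<in> D" and Au: "A u = x" unfolding u_def T_def using BD AB by auto
      have yu: "y = M *\<^sub>R x - u" by (simp add: y_def u_def)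
      have "A u - l *\<^sub>R u = l *\<^sub>R y" unfolding Au yu l_def using Mp
        by (simp add: algebra_simps)
      hence "u = R (l *\<^sub>R y)" using R(2) uD by metis
      hence u2: "u = l *\<^sub>R R y" using R(1) by (simp add: linear_simps)
      have "x = l *\<^sub>R y + l *\<^sub>R u" unfolding yu l_def using Mp
        by (simp add: algebra_simps)
      hence "x = l *\<^sub>R y + (l * l) *\<^sub>R R y" using u2 by simp
      hence "norm x \<le> norm (l *\<^sub>R y) + norm ((l * l) *\<^sub>R R y)" by (metis norm_triangle_ineq)
      also have "\<dots> \<le> l * norm y + (l * l) * (norm y * KR)"
        using l KR(1)[of y] by (simp add: mult_left_mono)
      also have "\<dots> = (l + l * l * KR) * norm y" by (simp add: algebra_simps)
      finally show "norm x \<le> (l + l * l * KR) * norm (M *\<^sub>R x - T x)" unfolding y_def .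
    qed
  qed
  have "inner (T x) x \<le> 1 / lam1 * (norm x)\<^sup>2"
    by (rule T_bound[OF Tbl Tsym]) (use Tpos lam(2) inv in auto)
  thus ?thesis using Tpos[of x] lam(2) by (simp add: field_simps)
qed



lemma quad_nonneg:
  fixes X Y r t s :: real
  assumes "X > 0" "4 * X * Y \<ge> r\<^sup>2"
  shows "X * t\<^sup>2 - r * t * s + Y * s\<^sup>2 \<ge> 0"
proof -
  have "4 * X * (X * t\<^sup>2 - r * t * s + Y * s\<^sup>2) = (2 * X * t - r * s)\<^sup>2 + (4 * X * Y - r\<^sup>2) * s\<^sup>2"
    by (simp add: power2_eq_square algebra_simps)
  also have "\<dots> \<ge> 0" using assms by simp
  finally show ?thesis using assms(1) by (simp add: zero_le_mult_iff)
qed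

lemma real_core:
  fixes \<alpha> \<gamma> \<mu> \<eta> \<rho> lam1 \<kappa> \<epsilon> c nP nq nb nth ny z iyb ieps :: real
  assumes par: "\<alpha> > 0" "\<gamma> > 0" "\<mu> \<ge> 0" "\<rho> > 0" "lam1 > 0"
    and kp: "\<kappa> > 0" "\<kappa> \<le> 1/2"
    and kX: "\<rho> * \<eta>\<^sup>2 / 2 - \<mu> / \<alpha> - \<kappa> > 0"
    and kD: "4 * (\<rho> * \<eta>\<^sup>2 / 2 - \<mu> / \<alpha> - \<kappa>) * ((1 - \<kappa>) * lam1 + \<rho> / 2) \<ge> (\<rho> * \<bar>\<eta>\<bar>)\<^sup>2"
    and eps: "\<epsilon>\<^sup>2 * (4 / lam1 + 1) \<le> min (\<gamma> / \<alpha>) \<kappa> / 2" "\<epsilon>\<^sup>2 \<le> 1"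
    and c: "c \<ge> 1 / min (\<gamma> / \<alpha>) \<kappa>"
      "c \<ge> 2 * (\<gamma> / \<alpha> + 1 + (\<rho> * \<bar>\<eta>\<bar> / 2 + \<rho> / 2) / lam1 + \<rho> * \<bar>\<eta>\<bar> / 2 + \<rho> * \<eta>\<^sup>2 / 2 + (4 / lam1 + 1))"
    and nn: "nP \<ge> 0" "nq \<ge> 0" "nb \<ge> 0" "nth \<ge> 0" "ny \<ge> 0" "z \<ge> 0"
    and y: "lam1 * ny\<^sup>2 \<le> nth\<^sup>2"
    and iyb: "\<bar>iyb\<bar> \<le> nb * ny"
    and ie: "\<bar>ieps\<bar> \<le> z * nq" "lam1 * z\<^sup>2 \<le> (2 * nb + nP)\<^sup>2"
  shows "(1/2 * (nP\<^sup>2 + nq\<^sup>2 + nb\<^sup>2 + nth\<^sup>2)) / c \<le>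
           \<gamma> / \<alpha> * nP\<^sup>2 + nq\<^sup>2 - \<mu> / \<alpha> * nb\<^sup>2 + nth\<^sup>2
             + \<rho> * (\<eta> * iyb + \<eta>\<^sup>2 / 2 * nb\<^sup>2 + 1/2 * ny\<^sup>2) - \<epsilon>\<^sup>2 * ieps
       \<and> \<gamma> / \<alpha> * nP\<^sup>2 + nq\<^sup>2 - \<mu> / \<alpha> * nb\<^sup>2 + nth\<^sup>2
             + \<rho> * (\<eta> * iyb + \<eta>\<^sup>2 / 2 * nb\<^sup>2 + 1/2 * ny\<^sup>2) - \<epsilon>\<^sup>2 * ieps
         \<le> c * (1/2 * (nP\<^sup>2 + nq\<^sup>2 + nb\<^sup>2 + nth\<^sup>2))"
proof -
  define S where "S = nP\<^sup>2 + nq\<^sup>2 + nb\<^sup>2 + nth\<^sup>2"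
  define C where "C = 4 / lam1 + 1"
  define m1 where "m1 = min (\<gamma> / \<alpha>) \<kappa>"
  define L0 where "L0 = \<gamma> / \<alpha> * nP\<^sup>2 + nq\<^sup>2 - \<mu> / \<alpha> * nb\<^sup>2 + nth\<^sup>2
             + \<rho> * (\<eta> * iyb + \<eta>\<^sup>2 / 2 * nb\<^sup>2 + 1/2 * ny\<^sup>2)"
  have S0: "S \<ge> 0" unfolding S_def by simp
  have m1p: "m1 > 0" unfolding m1_def using par kp by simp
  have Cp: "C > 0" unfolding C_def using par by (simp add: add_pos_pos)
  have z2: "z\<^sup>2 \<le> (8 * nb\<^sup>2 + 2 * nP\<^sup>2) / lam1"
  proof -
    have "(2 * nb + nP)\<^sup>2 \<le> 8 * nb\<^sup>2 + 2 * nP\<^sup>2"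
      using zero_le_square[of "2*nb - nP"] by (simp add: power2_eq_square algebra_simps)
    then show ?thesis using ie(2) par(5) by (simp add: pos_le_divide_eq mult.commute)
  qed
  have zq: "z * nq \<le> (z\<^sup>2 + nq\<^sup>2) / 2"
    using zero_le_square[of "z - nq"] by (simp add: power2_eq_square algebra_simps)
  have ieS: "\<bar>ieps\<bar> \<le> C * S"
  proof -
    have "\<bar>ieps\<bar> \<le> ((8 * nb\<^sup>2 + 2 * nP\<^sup>2) / lam1 + nq\<^sup>2) / 2" 
    proof -
      have "(z\<^sup>2 + nq\<^sup>2) / 2 \<le> ((8 * nb\<^sup>2 + 2 * nP\<^sup>2) / lam1 + nq\<^sup>2) / 2"
        using z2 by (intro divide_right_mono add_right_mono) auto
      thus ?thesis using ie(1) zq by linarith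
    qed
    also have "\<dots> \<le> C * S"
    proof -
      define w where "w = 1 / lam1"
      have wp: "w > 0" unfolding w_def using par(5) by simp
      have e1: "(8 * nb\<^sup>2 + 2 * nP\<^sup>2) / lam1 = w * (8 * nb\<^sup>2 + 2 * nP\<^sup>2)" by (simp add: w_def)
      have e2: "C = 4 * w + 1" by (simp add: w_def C_def)
      have e3: "C * S - (w * (8 * nb\<^sup>2 + 2 * nP\<^sup>2) + nq\<^sup>2) / 2
         = (3 * w + 1) * nP\<^sup>2 + (4 * w + 1/2) * nq\<^sup>2 + nb\<^sup>2 + (4 * w + 1) * nth\<^sup>2"
        unfolding e2 S_def by (simp add: field_simps)
      have "0 \<le> (3 * w + 1) * nP\<^sup>2 + (4 * w + 1/2) * nq\<^sup>2 + nb\<^sup>2 + (4 * w + 1) * nth\<^sup>2"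
        using wp by (intro add_nonneg_nonneg mult_nonneg_nonneg) auto
      thus ?thesis unfolding e1 using e3 by linarith
    qed
    finally show ?thesis .
  qed
  have epsS: "\<bar>\<epsilon>\<^sup>2 * ieps\<bar> \<le> \<epsilon>\<^sup>2 * C * S"
    using ieS by (simp add: abs_mult mult_left_mono mult.assoc)
  have epsS1: "\<epsilon>\<^sup>2 * C * S \<le> m1 / 2 * S"
  proof -
    have "\<epsilon>\<^sup>2 * C \<le> m1 / 2" using eps(1) unfolding C_def m1_def .
    from mult_right_mono[OF this S0] show ?thesis .
  qed
  have epsS2: "\<epsilon>\<^sup>2 * C * S \<le> C * S"
    using eps(2) S0 Cp by (simp add: mult_right_mono mult_le_cancel_right)
  define X where "X = \<rho> * \<eta>\<^sup>2 / 2 - \<mu> / \<alpha> - \<kappa>"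
  define Y where "Y = (1 - \<kappa>) * lam1 + \<rho> / 2"
  have q: "X * nb\<^sup>2 - (\<rho> * \<bar>\<eta>\<bar>) * nb * ny + Y * ny\<^sup>2 \<ge> 0"
    using quad_nonneg[where X=X and Y=Y and r="\<rho> * \<bar>\<eta>\<bar>" and t=nb and s=ny] kX kD unfolding X_def Y_def by simp
  have cross: "\<rho> * \<eta> * iyb \<ge> - (\<rho> * \<bar>\<eta>\<bar>) * nb * ny"
  proof -
    have "\<bar>\<eta> * iyb\<bar> \<le> \<bar>\<eta>\<bar> * (nb * ny)" using iyb by (simp add: abs_mult mult_left_mono)
    hence "\<eta> * iyb \<ge> - (\<bar>\<eta>\<bar> * (nb * ny))" by linarith
    hence "\<rho> * (\<eta> * iyb) \<ge> \<rho> * (- (\<bar>\<eta>\<bar> * (nb * ny)))" using par(4) by (intro mult_left_mono) auto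
    thus ?thesis by (simp add: algebra_simps)
  qed
  have th: "nth\<^sup>2 \<ge> \<kappa> * nth\<^sup>2 + (1 - \<kappa>) * lam1 * ny\<^sup>2"
  proof -
    have "(1 - \<kappa>) * (lam1 * ny\<^sup>2) \<le> (1 - \<kappa>) * nth\<^sup>2" using y kp by (simp add: mult_left_mono)
    thus ?thesis by (simp add: algebra_simps)
  qed
  have L0low: "L0 \<ge> \<gamma> / \<alpha> * nP\<^sup>2 + nq\<^sup>2 + \<kappa> * nb\<^sup>2 + \<kappa> * nth\<^sup>2"
  proof -
    have eq: "L0 - (\<gamma> / \<alpha> * nP\<^sup>2 + nq\<^sup>2 + \<kappa> * nb\<^sup>2 + \<kappa> * nth\<^sup>2)
      = (X * nb\<^sup>2 - (\<rho> * \<bar>\<eta>\<bar>) * nb * ny + Y * ny\<^sup>2) + (\<rho> * \<eta> * iyb + (\<rho> * \<bar>\<eta>\<bar>) * nb * ny)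
        + (nth\<^sup>2 - (\<kappa> * nth\<^sup>2 + (1 - \<kappa>) * lam1 * ny\<^sup>2))"
      unfolding L0_def X_def Y_def by (simp add: algebra_simps)
    have cross': "\<rho> * \<eta> * iyb + (\<rho> * \<bar>\<eta>\<bar>) * nb * ny \<ge> 0" using cross by (simp add: algebra_simps)
    show ?thesis using eq q cross' th by linarith
  qed
  have "\<gamma> / \<alpha> * nP\<^sup>2 + nq\<^sup>2 + \<kappa> * nb\<^sup>2 + \<kappa> * nth\<^sup>2 \<ge> m1 * S"
  proof -
    have a: "m1 * nP\<^sup>2 \<le> \<gamma> / \<alpha> * nP\<^sup>2" unfolding m1_def by (intro mult_right_mono) auto
    have b: "m1 * nq\<^sup>2 \<le> nq\<^sup>2" unfolding m1_def using kp par
      by (intro mult_left_le_one_le) auto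
    have d: "m1 * nb\<^sup>2 \<le> \<kappa> * nb\<^sup>2" unfolding m1_def by (intro mult_right_mono) auto
    have e: "m1 * nth\<^sup>2 \<le> \<kappa> * nth\<^sup>2" unfolding m1_def by (intro mult_right_mono) auto
    show ?thesis using a b d e unfolding S_def by (simp add: algebra_simps)
  qed
  hence Llow: "L0 - \<epsilon>\<^sup>2 * ieps \<ge> m1 / 2 * S" using L0low epsS epsS1 by linarith
  define C2 where "C2 = \<gamma> / \<alpha> + 1 + (\<rho> * \<bar>\<eta>\<bar> / 2 + \<rho> / 2) / lam1 + \<rho> * \<bar>\<eta>\<bar> / 2 + \<rho> * \<eta>\<^sup>2 / 2"
  have up1: "\<rho> * \<eta> * iyb \<le> \<rho> * \<bar>\<eta>\<bar> / 2 * (nb\<^sup>2 + ny\<^sup>2)"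
  proof -
    have "\<eta> * iyb \<le> \<bar>\<eta>\<bar> * (nb * ny)" using iyb
      by (metis abs_ge_self abs_mult abs_ge_zero mult_left_mono order_trans)
    also have "\<dots> \<le> \<bar>\<eta>\<bar> * ((nb\<^sup>2 + ny\<^sup>2) / 2)"
      using zero_le_square[of "nb - ny"] by (intro mult_left_mono) (simp_all add: power2_eq_square algebra_simps)
    finally have "\<rho> * (\<eta> * iyb) \<le> \<rho> * (\<bar>\<eta>\<bar> * ((nb\<^sup>2 + ny\<^sup>2) / 2))" using par(4) by (simp add: mult_left_mono)
    thus ?thesis by (simp add: algebra_simps)
  qed
  have ny2: "ny\<^sup>2 \<le> nth\<^sup>2 / lam1" using y par(5) by (simp add: pos_le_divide_eq mult.commute)
  have L0up: "L0 \<le> C2 * S"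
  proof -
    have mu: "\<mu> / \<alpha> * nb\<^sup>2 \<ge> 0" using par by simp
    have "L0 \<le> \<gamma> / \<alpha> * nP\<^sup>2 + nq\<^sup>2 + nth\<^sup>2 + \<rho> * \<bar>\<eta>\<bar> / 2 * (nb\<^sup>2 + ny\<^sup>2) + \<rho> * \<eta>\<^sup>2 / 2 * nb\<^sup>2 + \<rho> / 2 * ny\<^sup>2"
      using mu up1 unfolding L0_def by (simp add: algebra_simps)
    also have "\<dots> = \<gamma> / \<alpha> * nP\<^sup>2 + nq\<^sup>2 + nth\<^sup>2 + (\<rho> * \<bar>\<eta>\<bar> / 2 + \<rho> * \<eta>\<^sup>2 / 2) * nb\<^sup>2 + (\<rho> * \<bar>\<eta>\<bar> / 2 + \<rho> / 2) * ny\<^sup>2"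
      by (simp add: algebra_simps)
    also have "\<dots> \<le> \<gamma> / \<alpha> * nP\<^sup>2 + nq\<^sup>2 + nth\<^sup>2 + (\<rho> * \<bar>\<eta>\<bar> / 2 + \<rho> * \<eta>\<^sup>2 / 2) * nb\<^sup>2 + (\<rho> * \<bar>\<eta>\<bar> / 2 + \<rho> / 2) * (nth\<^sup>2 / lam1)"
      using ny2 par(4) by (intro add_left_mono mult_left_mono) auto
    also have "\<dots> \<le> C2 * S"
    proof -
      have g: "\<gamma> / \<alpha> \<le> C2" "1 \<le> C2" "\<rho> * \<bar>\<eta>\<bar> / 2 + \<rho> * \<eta>\<^sup>2 / 2 \<le> C2"
        "1 + (\<rho> * \<bar>\<eta>\<bar> / 2 + \<rho> / 2) / lam1 \<le> C2"
        unfolding C2_def using par by auto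
      have a: "\<gamma> / \<alpha> * nP\<^sup>2 \<le> C2 * nP\<^sup>2" using g(1) by (intro mult_right_mono) auto
      have b: "nq\<^sup>2 \<le> C2 * nq\<^sup>2" using g(2) mult_right_mono[OF g(2), of "nq\<^sup>2"] by simp
      have d: "(\<rho> * \<bar>\<eta>\<bar> / 2 + \<rho> * \<eta>\<^sup>2 / 2) * nb\<^sup>2 \<le> C2 * nb\<^sup>2" using g(3) by (intro mult_right_mono) auto
      have e: "(1 + (\<rho> * \<bar>\<eta>\<bar> / 2 + \<rho> / 2) / lam1) * nth\<^sup>2 \<le> C2 * nth\<^sup>2" using g(4) by (intro mult_right_mono) auto
      have f: "nth\<^sup>2 + (\<rho> * \<bar>\<eta>\<bar> / 2 + \<rho> / 2) * (nth\<^sup>2 / lam1) = (1 + (\<rho> * \<bar>\<eta>\<bar> / 2 + \<rho> / 2) / lam1) * nth\<^sup>2"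
        by (simp add: field_simps)
      show ?thesis using a b d e f unfolding S_def by (simp add: algebra_simps)
    qed
    finally show ?thesis .
  qed
  have Lup: "L0 - \<epsilon>\<^sup>2 * ieps \<le> (C2 + C) * S" using L0up epsS epsS2 by (simp add: distrib_right)
  have c1: "c \<ge> 1 / m1" using c(1) unfolding m1_def .
  have cp: "c > 0" using c1 m1p by (smt (verit) divide_pos_pos)
  have c2: "c \<ge> 2 * (C2 + C)" using c(2) unfolding C2_def C_def by (simp add: algebra_simps)
  have "(1/2 * S) / c \<le> m1 / 2 * S"
  proof -
    have "1 / c \<le> m1" using c1 m1p cp by (simp add: field_simps)
    hence "(1/2 * S) * (1 / c) \<le> (1/2 * S) * m1" using S0 by (intro mult_left_mono) auto
    thus ?thesis by (simp add: algebra_simps)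
  qed
  moreover have "(C2 + C) * S \<le> c * (1/2 * S)"
    using c2 S0 mult_right_mono[OF c2, of "S/2"] by (simp add: algebra_simps)
  ultimately show ?thesis using Llow Lup unfolding S_def L0_def by linarith
qed



theorem lemma7p5:
  fixes A B :: "'a::{real_inner,complete_space} \<Rightarrow> 'a" and D :: "'a set"
    and lam1 \<alpha> \<beta> \<gamma> \<mu> \<eta> \<rho> :: real
  assumes sa: "selfadjoint_op A D" and pos: "strictly_positive_op A D"
    and lam: "lam1 \<in> spectrum_op A D" "\<forall>l\<in>spectrum_op A D. lam1 \<le> l" "lam1 > 0"
    and B: "is_inv_sqrt A D B"
    and par: "\<alpha> > 0" "\<beta> > 0" "\<gamma> > 0" "\<mu> = \<gamma> - \<alpha> * \<beta>" "\<mu> \<ge> 0" "\<rho> > 0"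
    and h1: "\<eta>\<^sup>2 > \<mu> / (\<alpha> * lam1)"
    and h2: "\<rho> > 2 * \<mu> * lam1 / (\<alpha> * \<eta>\<^sup>2 * lam1 - \<mu>)"
  shows "\<exists>c>1. \<exists>\<epsilon>\<^sub>0>0. \<forall>\<epsilon>. 0 < \<epsilon> \<and> \<epsilon> < \<epsilon>\<^sub>0 \<longrightarrow>
    (\<forall>u\<in>H1 B. \<forall>v\<in>H1 B. \<forall>w \<theta>.
      (let L = \<gamma> / \<alpha> * (norm1 B (v + \<alpha> *\<^sub>R u))\<^sup>2 + (norm (w + \<alpha> *\<^sub>R v))\<^sup>2
               - \<mu> / \<alpha> * (norm1 B v)\<^sup>2 + (norm \<theta>)\<^sup>2
               + \<rho> * (\<eta> * inner \<theta> v + \<eta>\<^sup>2 / 2 * (norm1 B v)\<^sup>2 + 1/2 * (normm1 B \<theta>)\<^sup>2)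
               - \<epsilon>\<^sup>2 * inner (v - \<alpha> *\<^sub>R u) (w + \<alpha> *\<^sub>R v);
           E = 1/2 * ((norm1 B (v + \<alpha> *\<^sub>R u))\<^sup>2 + (norm (w + \<alpha> *\<^sub>R v))\<^sup>2
               + (norm1 B v)\<^sup>2 + (norm \<theta>)\<^sup>2)
       in E / c \<le> L \<and> L \<le> c * E))"
proof -
  have Bbl: "bounded_linear B" and Bsym: "\<And>x y. inner (B x) y = inner x (B y)"
    and BD: "\<And>x. B (B x) \<in> D" and AB: "\<And>x. A (B (B x)) = x"
    using B unfolding is_inv_sqrt_def by auto
  have Binj: "inj B"
  proof (rule injI)
    fix x y assume "B x = B y"
    hence "A (B (B x)) = A (B (B y))" by simp
    thus "x = y" using AB by simp
  qed
  have invB: "inv B (B x) = x" for x using Binj by (simp add: inv_f_f)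
  have Poinc: "lam1 * (norm (B x))\<^sup>2 \<le> (norm x)\<^sup>2" for x
    using poinc[OF lam(2,3) B] .
  define X0 where "X0 = \<rho> * \<eta>\<^sup>2 / 2 - \<mu> / \<alpha>"
  define Y0 where "Y0 = lam1 + \<rho> / 2"
  define D0 where "D0 = 4 * X0 * Y0 - (\<rho> * \<bar>\<eta>\<bar>)\<^sup>2"
  have den: "\<alpha> * \<eta>\<^sup>2 * lam1 - \<mu> > 0"
    using h1 par(1) lam(3) by (simp add: pos_divide_less_eq mult.commute mult.left_commute)
  have h2': "2 * \<mu> * lam1 < \<rho> * (\<alpha> * \<eta>\<^sup>2 * lam1 - \<mu>)"
    using h2 den by (simp add: pos_divide_less_eq mult.commute)
  have D0eq: "D0 = (2 / \<alpha>) * (\<rho> * (\<alpha> * \<eta>\<^sup>2 * lam1 - \<mu>) - 2 * \<mu> * lam1)"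
    unfolding D0_def X0_def Y0_def using par(1)
    by (simp add: field_simps power2_eq_square abs_mult_self_eq)
  have D0p: "D0 > 0" unfolding D0eq using h2' par(1) by simp
  have Y0p: "Y0 > 0" unfolding Y0_def using lam(3) par(6) by simp
  have X0p: "X0 > 0"
  proof -
    have "4 * X0 * Y0 > 0" using D0p unfolding D0_def
      by (smt (verit) zero_le_power2)
    thus ?thesis using Y0p by (simp add: zero_less_mult_iff)
  qed
  define \<kappa> where "\<kappa> = min (1/2) (min (X0 / 2) (D0 / (8 * (lam1 * X0 + Y0))))"
  have Zp: "lam1 * X0 + Y0 > 0" using lam(3) X0p Y0p by (simp add: add_pos_pos)
  have kmin: "\<kappa> \<le> min (X0 / 2) (D0 / (8 * (lam1 * X0 + Y0)))" unfolding \<kappa>_def by (rule min.cobounded2)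
  have kX2: "\<kappa> \<le> X0 / 2" using kmin min.cobounded1 order_trans by blast
  have kD2: "\<kappa> \<le> D0 / (8 * (lam1 * X0 + Y0))" using kmin min.cobounded2 order_trans by blast
  have kp1: "\<kappa> > 0" unfolding \<kappa>_def using X0p D0p Zp by auto
  have kp2: "\<kappa> \<le> 1/2" unfolding \<kappa>_def by (rule min.cobounded1)
  note kp = kp1 kp2
  have kX: "\<rho> * \<eta>\<^sup>2 / 2 - \<mu> / \<alpha> - \<kappa> > 0"
  proof -
    from kX2 show ?thesis using X0p unfolding X0_def by simp
  qed
  have kD: "4 * (\<rho> * \<eta>\<^sup>2 / 2 - \<mu> / \<alpha> - \<kappa>) * ((1 - \<kappa>) * lam1 + \<rho> / 2) \<ge> (\<rho> * \<bar>\<eta>\<bar>)\<^sup>2"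
  proof -
    have k1: "\<kappa> * (lam1 * X0 + Y0) \<le> D0 / 8"
    proof -
      from kD2 have "\<kappa> * (lam1 * X0 + Y0) \<le> D0 / (8 * (lam1 * X0 + Y0)) * (lam1 * X0 + Y0)"
        using Zp by (intro mult_right_mono) auto
      also have "D0 / (8 * (lam1 * X0 + Y0)) * (lam1 * X0 + Y0) = D0 / 8" using Zp by (simp add: field_simps)
      finally show ?thesis .
    qed
    have "4 * (\<rho> * \<eta>\<^sup>2 / 2 - \<mu> / \<alpha> - \<kappa>) * ((1 - \<kappa>) * lam1 + \<rho> / 2)
        = 4 * X0 * Y0 - 4 * (\<kappa> * (lam1 * X0 + Y0)) + 4 * \<kappa>\<^sup>2 * lam1"
      unfolding X0_def Y0_def by (simp add: algebra_simps power2_eq_square)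
    moreover have "4 * X0 * Y0 = D0 + (\<rho> * \<bar>\<eta>\<bar>)\<^sup>2" unfolding D0_def by simp
    moreover have "4 * \<kappa>\<^sup>2 * lam1 \<ge> 0" using lam(3) by simp
    ultimately show ?thesis using k1 D0p by linarith
  qed
  define m1 where "m1 = min (\<gamma> / \<alpha>) \<kappa>"
  have m1p: "m1 > 0" unfolding m1_def using par kp by simp
  define C where "C = 4 / lam1 + 1"
  have Cp: "C > 0" unfolding C_def using lam(3) by (simp add: add_pos_pos)
  define C2 where "C2 = \<gamma> / \<alpha> + 1 + (\<rho> * \<bar>\<eta>\<bar> / 2 + \<rho> / 2) / lam1 + \<rho> * \<bar>\<eta>\<bar> / 2 + \<rho> * \<eta>\<^sup>2 / 2 + (4 / lam1 + 1)"
  define c where "c = max 2 (max (1 / m1) (2 * C2))"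
  define \<epsilon>0 where "\<epsilon>0 = min 1 (m1 / (2 * C))"
  have cgt: "c > 1" unfolding c_def by simp
  have e0p: "\<epsilon>0 > 0" unfolding \<epsilon>0_def using m1p Cp by simp
  have main: "let L = \<gamma> / \<alpha> * (norm1 B (v + \<alpha> *\<^sub>R u))\<^sup>2 + (norm (w + \<alpha> *\<^sub>R v))\<^sup>2
               - \<mu> / \<alpha> * (norm1 B v)\<^sup>2 + (norm \<theta>)\<^sup>2
               + \<rho> * (\<eta> * inner \<theta> v + \<eta>\<^sup>2 / 2 * (norm1 B v)\<^sup>2 + 1/2 * (normm1 B \<theta>)\<^sup>2)
               - \<epsilon>\<^sup>2 * inner (v - \<alpha> *\<^sub>R u) (w + \<alpha> *\<^sub>R v);
           E = 1/2 * ((norm1 B (v + \<alpha> *\<^sub>R u))\<^sup>2 + (norm (w + \<alpha> *\<^sub>R v))\<^sup>2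
               + (norm1 B v)\<^sup>2 + (norm \<theta>)\<^sup>2)
       in E / c \<le> L \<and> L \<le> c * E"
    if e: "0 < \<epsilon> \<and> \<epsilon> < \<epsilon>0" and u: "u \<in> H1 B" and v: "v \<in> H1 B" for \<epsilon> u v w \<theta>
  proof -
    obtain a where a: "u = B a" using u unfolding H1_def by blast
    obtain b where b: "v = B b" using v unfolding H1_def by blast
    have e1: "\<epsilon>\<^sup>2 \<le> 1"
      using e unfolding \<epsilon>0_def by (simp add: power_le_one)
    have e2: "\<epsilon>\<^sup>2 * (4 / lam1 + 1) \<le> min (\<gamma> / \<alpha>) \<kappa> / 2"
    proof -
      have "\<epsilon>\<^sup>2 \<le> \<epsilon>" using e unfolding \<epsilon>0_def by (simp add: power2_eq_square mult_left_le_one_le)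
      also have "\<dots> \<le> m1 / (2 * C)" using e unfolding \<epsilon>0_def by simp
      finally have "\<epsilon>\<^sup>2 * C \<le> m1 / (2 * C) * C" using Cp by (intro mult_right_mono) auto
      also have "m1 / (2 * C) * C = m1 / 2" using Cp by simp
      finally show ?thesis unfolding C_def m1_def .
    qed
    have c1: "c \<ge> 1 / min (\<gamma> / \<alpha>) \<kappa>" unfolding c_def m1_def by simp
    have c2: "c \<ge> 2 * (\<gamma> / \<alpha> + 1 + (\<rho> * \<bar>\<eta>\<bar> / 2 + \<rho> / 2) / lam1 + \<rho> * \<bar>\<eta>\<bar> / 2 + \<rho> * \<eta>\<^sup>2 / 2 + (4 / lam1 + 1))"
      unfolding c_def C2_def by simp
    have vu: "v + \<alpha> *\<^sub>R u = B (b + \<alpha> *\<^sub>R a)" unfolding a b using Bbl by (simp add: linear_simps)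
    have vmu: "v - \<alpha> *\<^sub>R u = B (b - \<alpha> *\<^sub>R a)" unfolding a b using Bbl by (simp add: linear_simps)
    have n1: "norm1 B (v + \<alpha> *\<^sub>R u) = norm (b + \<alpha> *\<^sub>R a)" unfolding vu norm1_def invB ..
    have n2: "norm1 B v = norm b" unfolding b norm1_def invB ..
    have n3: "normm1 B \<theta> = norm (B \<theta>)" unfolding normm1_def ..
    have i1: "inner \<theta> v = inner (B \<theta>) b" unfolding b using Bsym by simp
    have iyb: "\<bar>inner (B \<theta>) b\<bar> \<le> norm b * norm (B \<theta>)"
      using Cauchy_Schwarz_ineq2[of "B \<theta>" b] by (simp add: mult.commute)
    have ie1: "\<bar>inner (B (b - \<alpha> *\<^sub>R a)) (w + \<alpha> *\<^sub>R v)\<bar> \<le> norm (B (b - \<alpha> *\<^sub>R a)) * norm (w + \<alpha> *\<^sub>R v)"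
      by (rule Cauchy_Schwarz_ineq2)
    have ie2: "lam1 * (norm (B (b - \<alpha> *\<^sub>R a)))\<^sup>2 \<le> (2 * norm b + norm (b + \<alpha> *\<^sub>R a))\<^sup>2"
    proof -
      have "b - \<alpha> *\<^sub>R a = 2 *\<^sub>R b - (b + \<alpha> *\<^sub>R a)" by (simp add: algebra_simps scaleR_2)
      hence "norm (b - \<alpha> *\<^sub>R a) \<le> norm (2 *\<^sub>R b) + norm (b + \<alpha> *\<^sub>R a)"
        by (metis norm_triangle_ineq4)
      hence "norm (b - \<alpha> *\<^sub>R a) \<le> 2 * norm b + norm (b + \<alpha> *\<^sub>R a)" by simp
      hence "(norm (b - \<alpha> *\<^sub>R a))\<^sup>2 \<le> (2 * norm b + norm (b + \<alpha> *\<^sub>R a))\<^sup>2"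
        by (intro power_mono) auto
      thus ?thesis using Poinc[of "b - \<alpha> *\<^sub>R a"] by linarith
    qed
    note core = real_core[OF par(1) par(3) par(5) par(6) lam(3) kp kX kD e2 e1 c1 c2
        norm_ge_zero norm_ge_zero norm_ge_zero norm_ge_zero norm_ge_zero norm_ge_zero
        Poinc[of \<theta>] iyb ie1 ie2]
    show ?thesis
      unfolding Let_def n1 n2 n3 i1 vmu using core by simp
  qed
  show ?thesis using cgt e0p main by blast
qed

end
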